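(* For every profile $P$: $|\mathit{TC}(P)|=2$ if and only if all but two agents have distinct top choices (there are distinct agents $x,y$ with the same top choice $p$, and the top choices of the agents in $N\setminus\{y\}$ are pairwise distinct) and these two agents $x,y$ also share the same second-best house $q$, which is not top-ranked by any agent. Analogously, $|\mathit{BC}(P)|=2$ if and only if all but two agents have distinct bottom choices (there are distinct agents $x,y$ with the same last-ranked house $p$, and the last-ranked houses of the agents in $N\setminus\{y\}$ are pairwise distinct) and these two agents share the same second-worst house $q$, which is not bottom-ranked by any agent.
   Context: Let $N=\{1,\dots,n\}$ be agents and $H$ a set of $n$ houses. A profile $P=(\succ_1,\dots,\succ_n)$ gives each agent a strict linear order on $H$; an agent's top (bottom) choice is the house she ranks first (last). An assignment is a bijection $N\to H$; $M$ is the set of assignments. Agent $x$ weakly prefers $\mu$ to $\lambda$ if $\mu(x)\succ_x\lambda(x)$ or $\mu(x)=\lambda(x)$. $N_{\mu,\lambda}$ is the set of agents weakly preferring $\mu$ to $\lambda$; $\mu\succsim\lambda$ if $|N_{\mu,\lambda}|\ge|N_{\lambda,\mu}|$, and $\succsim^*$ is its transitive closure. $\mathit{TC}(P)=\{\mu\in M:\mu\succsim^*\lambda\ \forall\lambda\in M\}$, $\mathit{BC}(P)=\{\mu\in M:\lambda\succsim^*\mu\ \forall\lambda\in M\}$. *)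

theory Defs
  imports Main "HOL-Library.FuncSet"
begin

(* A preference is a strict linear order r on the house set H: (a,b) \<in> r means a is strictly preferred to b. *)
definition is_pref :: "'h set \<Rightarrow> ('h \<times> 'h) set \<Rightarrow> bool" where
  "is_pref H r \<longleftrightarrow> strict_linear_order_on H r \<and> r \<subseteq> H \<times> H"

definition is_profile :: "'a set \<Rightarrow> 'h set \<Rightarrow> ('a \<Rightarrow> ('h \<times> 'h) set) \<Rightarrow> bool" where
  "is_profile N H P \<longleftrightarrow> (\<forall>x\<in>N. is_pref H (P x))"

definition assignments :: "'a set \<Rightarrow> 'h set \<Rightarrow> ('a \<Rightarrow> 'h) set" where
  "assignments N H = {\<mu> \<in> extensional N. bij_betw \<mu> N H}"

definition weak_pref_agents :: "'a set \<Rightarrow> ('a \<Rightarrow> ('h \<times> 'h) set) \<Rightarrow> ('a \<Rightarrow> 'h) \<Rightarrow> ('a \<Rightarrow> 'h) \<Rightarrow> 'a set" where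
  "weak_pref_agents N P \<mu> \<nu> = {x \<in> N. (\<mu> x, \<nu> x) \<in> P x \<or> \<mu> x = \<nu> x}"

definition pop_rel :: "'a set \<Rightarrow> 'h set \<Rightarrow> ('a \<Rightarrow> ('h \<times> 'h) set) \<Rightarrow> (('a \<Rightarrow> 'h) \<times> ('a \<Rightarrow> 'h)) set" where
  "pop_rel N H P = {(\<mu>, \<nu>). \<mu> \<in> assignments N H \<and> \<nu> \<in> assignments N H \<and>
      card (weak_pref_agents N P \<mu> \<nu>) \<ge> card (weak_pref_agents N P \<nu> \<mu>)}"

definition TC :: "'a set \<Rightarrow> 'h set \<Rightarrow> ('a \<Rightarrow> ('h \<times> 'h) set) \<Rightarrow> ('a \<Rightarrow> 'h) set" where
  "TC N H P = {\<mu> \<in> assignments N H. \<forall>\<nu> \<in> assignments N H. (\<mu>, \<nu>) \<in> (pop_rel N H P)\<^sup>+}"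

definition BC :: "'a set \<Rightarrow> 'h set \<Rightarrow> ('a \<Rightarrow> ('h \<times> 'h) set) \<Rightarrow> ('a \<Rightarrow> 'h) set" where
  "BC N H P = {\<mu> \<in> assignments N H. \<forall>\<nu> \<in> assignments N H. (\<nu>, \<mu>) \<in> (pop_rel N H P)\<^sup>+}"

definition first_choice :: "'h set \<Rightarrow> ('h \<times> 'h) set \<Rightarrow> 'h" where
  "first_choice H r = (THE h. h \<in> H \<and> (\<forall>h'\<in>H. h' \<noteq> h \<longrightarrow> (h, h') \<in> r))"

definition second_choice :: "'h set \<Rightarrow> ('h \<times> 'h) set \<Rightarrow> 'h" where
  "second_choice H r = (THE h. h \<in> H \<and> h \<noteq> first_choice H r \<and>
       (\<forall>h'\<in>H - {first_choice H r, h}. (h, h') \<in> r))"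

definition last_choice :: "'h set \<Rightarrow> ('h \<times> 'h) set \<Rightarrow> 'h" where
  "last_choice H r = first_choice H (r\<inverse>)"

definition second_last_choice :: "'h set \<Rightarrow> ('h \<times> 'h) set \<Rightarrow> 'h" where
  "second_last_choice H r = second_choice H (r\<inverse>)"

end

theory Submission imports Defs begin

lemma pref_irrefl: "is_pref H r \<Longrightarrow> (a,a) \<notin> r"
  by (auto simp: is_pref_def strict_linear_order_on_def irrefl_def)

lemma pref_asym: "is_pref H r \<Longrightarrow> (a,b) \<in> r \<Longrightarrow> (b,a) \<notin> r"
  unfolding is_pref_def strict_linear_order_on_def irrefl_def trans_def by blast

lemma pref_total: "is_pref H r \<Longrightarrow> a \<in> H \<Longrightarrow> b \<in> H \<Longrightarrow> a \<noteq> b \<Longrightarrow> (a,b) \<in> r \<or> (b,a) \<in> r"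
  unfolding is_pref_def strict_linear_order_on_def total_on_def by blast

lemma pref_in: "is_pref H r \<Longrightarrow> (a,b) \<in> r \<Longrightarrow> a \<in> H \<and> b \<in> H"
  unfolding is_pref_def by blast

lemma pref_max:
  assumes r: "is_pref H r" and fin: "finite H" and A: "A \<subseteq> H" "A \<noteq> {}"
  shows "\<exists>m\<in>A. \<forall>h\<in>A. h \<noteq> m \<longrightarrow> (m,h) \<in> r"
proof -
  have fr: "finite r" using r fin unfolding is_pref_def
    by (meson finite_SigmaI finite_subset)
  have tr: "trans r" and ir: "irrefl r" using r unfolding is_pref_def strict_linear_order_on_def by auto
  have "acyclic r" unfolding acyclic_def using trancl_id[OF tr] ir by (simp add: irrefl_def)
  hence wf: "wf r" using finite_acyclic_wf fr by blast
  obtain x where "x \<in> A" using A by blast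
  from wfE_min[OF wf this] obtain m where m: "m \<in> A" "\<And>y. (y,m) \<in> r \<Longrightarrow> y \<notin> A" by metis
  show ?thesis
  proof (intro bexI[OF _ m(1)] ballI impI)
    fix h assume "h \<in> A" "h \<noteq> m"
    thus "(m,h) \<in> r" using pref_total[OF r, of m h] m A by blast
  qed
qed

lemma first_choice_prop:
  assumes r: "is_pref H r" and fin: "finite H" and ne: "H \<noteq> {}"
  shows "first_choice H r \<in> H \<and> (\<forall>h\<in>H. h \<noteq> first_choice H r \<longrightarrow> (first_choice H r, h) \<in> r)"
proof -
  obtain m where m: "m \<in> H" "\<forall>h\<in>H. h \<noteq> m \<longrightarrow> (m,h) \<in> r" using pref_max[OF r fin order_refl ne] by blast
  have "first_choice H r = m" unfolding first_choice_def
  proof (rule the_equality)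
    show "m \<in> H \<and> (\<forall>h'\<in>H. h' \<noteq> m \<longrightarrow> (m, h') \<in> r)" using m by blast
  next
    fix h assume h: "h \<in> H \<and> (\<forall>h'\<in>H. h' \<noteq> h \<longrightarrow> (h, h') \<in> r)"
    show "h = m"
    proof (rule ccontr)
      assume "h \<noteq> m"
      hence "(h,m) \<in> r" "(m,h) \<in> r" using h m by auto
      thus False using pref_asym[OF r] by blast
    qed
  qed
  thus ?thesis using m by simp
qed

lemma first_choice_top:
  assumes r: "is_pref H r" and fin: "finite H" and ne: "H \<noteq> {}"
  shows "(h, first_choice H r) \<notin> r"
proof
  assume h: "(h, first_choice H r) \<in> r"
  have "h \<in> H" using pref_in[OF r h] by simp
  moreover have "h \<noteq> first_choice H r" using h pref_irrefl[OF r] by metis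
  ultimately have "(first_choice H r, h) \<in> r" using first_choice_prop[OF assms] by blast
  thus False using pref_asym[OF r h] by blast
qed

lemma second_choice_eq:
  assumes r: "is_pref H r" and fin: "finite H" and ne: "H \<noteq> {}"
    and q: "q \<in> H" "q \<noteq> first_choice H r" "\<forall>h\<in>H - {first_choice H r, q}. (q,h) \<in> r"
  shows "second_choice H r = q"
  unfolding second_choice_def
proof (rule the_equality)
  show "q \<in> H \<and> q \<noteq> first_choice H r \<and> (\<forall>h'\<in>H - {first_choice H r, q}. (q, h') \<in> r)" using q by blast
next
  fix h assume h: "h \<in> H \<and> h \<noteq> first_choice H r \<and> (\<forall>h'\<in>H - {first_choice H r, h}. (h, h') \<in> r)"
  show "h = q"
  proof (rule ccontr)
    assume "h \<noteq> q"
    hence "(h,q) \<in> r" "(q,h) \<in> r" using h q by auto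
    thus False using pref_asym[OF r] by blast
  qed
qed

lemma second_choice_prop:
  assumes r: "is_pref H r" and fin: "finite H" and two: "a \<in> H" "b \<in> H" "a \<noteq> b"
  shows "second_choice H r \<in> H \<and> second_choice H r \<noteq> first_choice H r \<and>
     (\<forall>h\<in>H - {first_choice H r, second_choice H r}. (second_choice H r, h) \<in> r)"
proof -
  have ne: "H \<noteq> {}" using two by blast
  have "H - {first_choice H r} \<noteq> {}"
  proof
    assume "H - {first_choice H r} = {}"
    hence "H \<subseteq> {first_choice H r}" by blast
    thus False using two by blast
  qed
  then obtain m where m: "m \<in> H - {first_choice H r}" "\<forall>h\<in>H - {first_choice H r}. h \<noteq> m \<longrightarrow> (m,h) \<in> r"
    using pref_max[OF r fin Diff_subset] by metis
  have "second_choice H r = m" by (rule second_choice_eq[OF r fin ne]) (use m in auto)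
  thus ?thesis using m by simp
qed


locale hm =
  fixes N :: "'a set" and H :: "'h set" and P :: "'a \<Rightarrow> ('h \<times> 'h) set"
  assumes finN: "finite N" and finH: "finite H" and cardNH: "card N = card H"
    and prof: "is_profile N H P"
begin

definition tp where "tp z = first_choice H (P z)"
definition sc where "sc z = second_choice H (P z)"
definition S where "S \<mu> \<nu> = {x\<in>N. (\<mu> x, \<nu> x) \<in> P x}"
definition sw :: "('a \<Rightarrow> 'h) \<Rightarrow> 'a \<Rightarrow> 'a \<Rightarrow> 'a \<Rightarrow> 'h" where "sw \<mu> a b = \<mu>(a := \<mu> b, b := \<mu> a)"

abbreviation M where "M \<equiv> assignments N H"
abbreviation R where "R \<equiv> pop_rel N H P"

lemma prefz: "z \<in> N \<Longrightarrow> is_pref H (P z)"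
  using prof unfolding is_profile_def by blast

lemma asg: "\<mu> \<in> M \<Longrightarrow> \<mu> \<in> extensional N \<and> inj_on \<mu> N \<and> \<mu> ` N = H"
  unfolding assignments_def bij_betw_def by blast

lemma asg_H: "\<mu> \<in> M \<Longrightarrow> z \<in> N \<Longrightarrow> \<mu> z \<in> H"
  using asg by blast

lemma asg_surj: "\<mu> \<in> M \<Longrightarrow> h \<in> H \<Longrightarrow> \<exists>c\<in>N. \<mu> c = h"
  using asg by (metis imageE)

lemma asg_inj: "\<mu> \<in> M \<Longrightarrow> a \<in> N \<Longrightarrow> b \<in> N \<Longrightarrow> \<mu> a = \<mu> b \<Longrightarrow> a = b"
  using asg by (meson inj_onD)

lemma asg_ext: "\<mu> \<in> M \<Longrightarrow> \<nu> \<in> M \<Longrightarrow> (\<And>z. z \<in> N \<Longrightarrow> \<mu> z = \<nu> z) \<Longrightarrow> \<mu> = \<nu>"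
  using asg extensionalityI by metis

lemma Hne: "z \<in> N \<Longrightarrow> H \<noteq> {}"
proof
  assume "z \<in> N" "H = {}"
  hence "card N = 0" using cardNH by simp
  thus False using finN \<open>z \<in> N\<close> by auto
qed

lemma tp_prop: "z \<in> N \<Longrightarrow> tp z \<in> H \<and> (\<forall>h\<in>H. h \<noteq> tp z \<longrightarrow> (tp z, h) \<in> P z)"
  unfolding tp_def using first_choice_prop[OF prefz finH Hne] by blast

lemma tp_H: "z \<in> N \<Longrightarrow> tp z \<in> H" using tp_prop by blast

lemma tp_better: "z \<in> N \<Longrightarrow> h \<in> H \<Longrightarrow> h \<noteq> tp z \<Longrightarrow> (tp z, h) \<in> P z"
  using tp_prop by blast

lemma tp_top: "z \<in> N \<Longrightarrow> (h, tp z) \<notin> P z"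
  unfolding tp_def using first_choice_top[OF prefz finH Hne] by blast

lemma irr: "z \<in> N \<Longrightarrow> (h, h) \<notin> P z"
  using pref_irrefl[OF prefz] by blast

lemma asy: "z \<in> N \<Longrightarrow> (h, h') \<in> P z \<Longrightarrow> (h', h) \<notin> P z"
  using pref_asym[OF prefz] by blast

lemma tot: "z \<in> N \<Longrightarrow> h \<in> H \<Longrightarrow> h' \<in> H \<Longrightarrow> h \<noteq> h' \<Longrightarrow> (h, h') \<in> P z \<or> (h', h) \<in> P z"
  using pref_total[OF prefz] by blast

lemma two_H: assumes "z \<in> N" "w \<in> N" "z \<noteq> w" shows "\<exists>a b. a \<in> H \<and> b \<in> H \<and> a \<noteq> b"
proof -
  have "{z,w} \<subseteq> N" using assms by blast
  hence "card {z,w} \<le> card N" using finN card_mono by blast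
  hence "2 \<le> card H" using assms cardNH by simp
  thus ?thesis using finH
    by (metis card_2_iff' card_le_Suc_iff numeral_2_eq_2 ex_in_conv insert_iff)
qed

lemma sc_prop: assumes "z \<in> N" "w \<in> N" "z \<noteq> w"
  shows "sc z \<in> H \<and> sc z \<noteq> tp z \<and> (\<forall>h\<in>H - {tp z, sc z}. (sc z, h) \<in> P z)"
proof -
  obtain a b where "a \<in> H" "b \<in> H" "a \<noteq> b" using two_H[OF assms] by blast
  from second_choice_prop[OF prefz[OF assms(1)] finH this] show ?thesis
    unfolding sc_def tp_def .
qed

lemma sc_eq: "z \<in> N \<Longrightarrow> q \<in> H \<Longrightarrow> q \<noteq> tp z \<Longrightarrow> \<forall>h\<in>H - {tp z, q}. (q,h) \<in> P z \<Longrightarrow> sc z = q"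
  unfolding sc_def tp_def using second_choice_eq[OF prefz finH Hne] by blast

lemma mk_assign:
  assumes "f \<in> extensional N" "inj_on f N" "f ` N \<subseteq> H"
  shows "f \<in> M"
proof -
  have "card (f ` N) = card H" using card_image[OF assms(2)] cardNH by simp
  hence "f ` N = H" using card_subset_eq[OF finH assms(3)] by blast
  thus ?thesis unfolding assignments_def bij_betw_def using assms by blast
qed

lemma sw_a[simp]: "sw \<mu> a b a = \<mu> b" unfolding sw_def by simp
lemma sw_b[simp]: "sw \<mu> a b b = \<mu> a" unfolding sw_def by simp
lemma sw_o: "x \<noteq> a \<Longrightarrow> x \<noteq> b \<Longrightarrow> sw \<mu> a b x = \<mu> x" unfolding sw_def by simp
lemma sw_inv: "sw (sw \<mu> a b) b a = \<mu>" unfolding sw_def by (rule ext) simp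

lemma sw_assign:
  assumes mu: "\<mu> \<in> M" and a: "a \<in> N" and b: "b \<in> N"
  shows "sw \<mu> a b \<in> M"
proof (rule mk_assign)
  show "sw \<mu> a b \<in> extensional N"
    using asg[OF mu] a b unfolding extensional_def sw_def by auto
  show "inj_on (sw \<mu> a b) N"
  proof (rule inj_onI)
    fix x y assume xy: "x \<in> N" "y \<in> N" "sw \<mu> a b x = sw \<mu> a b y"
    show "x = y"
      using xy a b asg_inj[OF mu] unfolding sw_def by (auto split: if_splits)
  qed
  show "sw \<mu> a b ` N \<subseteq> H"
    using asg_H[OF mu] a b unfolding sw_def by auto
qed

lemma S_fin: "finite (S \<mu> \<nu>)" unfolding S_def using finN by simp

lemma R_iff: "(\<mu>,\<nu>) \<in> R \<longleftrightarrow> \<mu> \<in> M \<and> \<nu> \<in> M \<and> card (S \<nu> \<mu>) \<le> card (S \<mu> \<nu>)"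
proof -
  define E where "E \<mu> \<nu> = {x\<in>N. \<mu> x = \<nu> x}" for \<mu> \<nu> :: "'a \<Rightarrow> 'h"
  have W: "weak_pref_agents N P \<mu>' \<nu>' = E \<mu>' \<nu>' \<union> S \<mu>' \<nu>'" for \<mu>' \<nu>'
    unfolding weak_pref_agents_def E_def S_def by blast
  have D: "E \<mu>' \<nu>' \<inter> S \<mu>' \<nu>' = {}" for \<mu>' \<nu>'
  proof (rule equals0I)
    fix x assume "x \<in> E \<mu>' \<nu>' \<inter> S \<mu>' \<nu>'"
    hence "x \<in> N" "\<mu>' x = \<nu>' x" "(\<mu>' x, \<nu>' x) \<in> P x" unfolding E_def S_def by auto
    thus False using irr by metis
  qed
  have fE: "finite (E \<mu>' \<nu>')" for \<mu>' \<nu>' unfolding E_def using finN by simp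
  have C: "card (weak_pref_agents N P \<mu>' \<nu>') = card (E \<mu>' \<nu>') + card (S \<mu>' \<nu>')" for \<mu>' \<nu>'
    unfolding W using card_Un_disjoint[OF fE S_fin D] .
  have Es: "E \<nu> \<mu> = E \<mu> \<nu>" unfolding E_def by auto
  have "card (weak_pref_agents N P \<nu> \<mu>) \<le> card (weak_pref_agents N P \<mu> \<nu>) \<longleftrightarrow> card (S \<nu> \<mu>) \<le> card (S \<mu> \<nu>)"
    unfolding C Es by simp
  thus ?thesis unfolding pop_rel_def by simp
qed

lemma R_M: "(\<mu>,\<nu>) \<in> R \<Longrightarrow> \<mu> \<in> M \<and> \<nu> \<in> M" using R_iff by blast

lemma TC_M: "\<rho> \<in> TC N H P \<Longrightarrow> \<rho> \<in> M" unfolding TC_def by blast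

lemma TC_up: "\<rho> \<in> TC N H P \<Longrightarrow> (l,\<rho>) \<in> R \<Longrightarrow> l \<in> TC N H P"
proof -
  assume r: "\<rho> \<in> TC N H P" and lr: "(l,\<rho>) \<in> R"
  have "l \<in> M" using R_M[OF lr] by blast
  moreover have "(l, \<nu>) \<in> R\<^sup>+" if "\<nu> \<in> M" for \<nu>
  proof -
    have "(\<rho>, \<nu>) \<in> R\<^sup>+" using r that unfolding TC_def by blast
    thus ?thesis using trancl_into_trancl2[OF lr] by blast
  qed
  ultimately show ?thesis unfolding TC_def by blast
qed

lemma swap_TC:
  assumes rho: "\<rho> \<in> TC N H P" and z: "z \<in> N" and w: "w \<in> N" and pz: "(\<rho> w, \<rho> z) \<in> P z"
  shows "sw \<rho> z w \<in> TC N H P \<and> sw \<rho> z w \<noteq> \<rho>"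
proof -
  have rM: "\<rho> \<in> M" using TC_M[OF rho] .
  have zw: "z \<noteq> w" using pz irr[OF z] by metis
  let ?l = "sw \<rho> z w"
  have lM: "?l \<in> M" using sw_assign[OF rM z w] .
  have zin: "z \<in> S ?l \<rho>" unfolding S_def using z pz by simp
  have sub: "S \<rho> ?l \<subseteq> {w}"
  proof
    fix x assume x: "x \<in> S \<rho> ?l"
    hence xN: "x \<in> N" and xp: "(\<rho> x, ?l x) \<in> P x" unfolding S_def by auto
    show "x \<in> {w}"
    proof (cases "x = z")
      case True
      thus ?thesis using xp asy[OF z pz] by simp
    next
      case False
      show ?thesis
      proof (rule ccontr)
        assume "x \<notin> {w}"
        hence "?l x = \<rho> x" using False sw_o by simp
        thus False using xp irr[OF xN] by simp
      qed
    qed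
  qed
  have "card (S \<rho> ?l) \<le> 1" using card_mono[OF _ sub] by simp
  moreover have "1 \<le> card (S ?l \<rho>)" using zin S_fin
    by (metis One_nat_def Suc_leI card_gt_0_iff empty_iff)
  ultimately have "(?l, \<rho>) \<in> R" using R_iff rM lM by simp
  hence "?l \<in> TC N H P" using TC_up[OF rho] by blast
  moreover have "?l \<noteq> \<rho>"
  proof
    assume "?l = \<rho>"
    hence "?l z = \<rho> z" by simp
    thus False using pz irr[OF z] by simp
  qed
  ultimately show ?thesis by blast
qed

lemma alltop_unique:
  assumes rM: "\<rho> \<in> M" and top: "\<forall>z\<in>N. \<rho> z = tp z" and lr: "(l,\<rho>) \<in> R"
  shows "l = \<rho>"
proof -
  have lM: "l \<in> M" using R_M[OF lr] by blast
  have e: "S l \<rho> = {}" unfolding S_def using top tp_top by auto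
  have "card (S \<rho> l) = 0" using lr R_iff e by simp
  hence e2: "S \<rho> l = {}" using S_fin by simp
  show ?thesis
  proof (rule asg_ext[OF lM rM])
    fix z assume z: "z \<in> N"
    show "l z = \<rho> z"
    proof (rule ccontr)
      assume ne: "l z \<noteq> \<rho> z"
      have "(tp z, l z) \<in> P z" using tp_better[OF z asg_H[OF lM z]] ne top z by simp
      hence "z \<in> S \<rho> l" unfolding S_def using top z by simp
      thus False using e2 by simp
    qed
  qed
qed

lemma alltop_contra:
  assumes r: "\<rho> \<in> TC N H P" and r2: "\<rho>' \<in> TC N H P" and ne: "\<rho> \<noteq> \<rho>'"
  shows "\<exists>z\<in>N. \<rho> z \<noteq> tp z"
proof (rule ccontr)
  assume "\<not> ?thesis"
  hence top: "\<forall>z\<in>N. \<rho> z = tp z" by blast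
  have rM: "\<rho> \<in> M" using TC_M[OF r] .
  have "(\<rho>', \<rho>) \<in> R\<^sup>+" using r2 rM unfolding TC_def by blast
  hence "\<rho>' = \<rho>"
  proof (induction rule: converse_trancl_induct)
    case (base y)
    then show ?case using alltop_unique[OF rM top] by blast
  next
    case (step y z)
    then show ?case using alltop_unique[OF rM top] by blast
  qed
  thus False using ne by simp
qed


lemma Sle:
  assumes x: "x \<in> N" and y: "y \<in> N" and mu: "\<mu> \<in> M"
    and mx: "\<mu> x = tp x" and oth: "\<forall>z\<in>N-{x,y}. \<mu> z = tp z"
  shows "S \<nu> \<mu> \<subseteq> {y}"
proof
  fix z assume z: "z \<in> S \<nu> \<mu>"
  hence zN: "z \<in> N" and zp: "(\<nu> z, \<mu> z) \<in> P z" unfolding S_def by auto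
  show "z \<in> {y}"
  proof (rule ccontr)
    assume "z \<notin> {y}"
    hence "\<mu> z = tp z" using mx oth zN by (cases "z = x") auto
    thus False using zp tp_top[OF zN] by simp
  qed
qed

lemma dom_strict:
  assumes x: "x \<in> N" and y: "y \<in> N" and xy: "x \<noteq> y" and mu: "\<mu> \<in> M"
    and mx: "\<mu> x = tp x" and tpy: "tp y = tp x" and my: "\<mu> y = sc y"
    and oth: "\<forall>z\<in>N-{x,y}. \<mu> z = tp z"
    and nu: "\<nu> \<in> M" and n1: "\<nu> \<noteq> \<mu>" and n2: "\<nu> \<noteq> sw \<mu> x y"
  shows "card (S \<nu> \<mu>) < card (S \<mu> \<nu>)"
proof -
  have scp: "sc y \<in> H \<and> sc y \<noteq> tp y \<and> (\<forall>h\<in>H - {tp y, sc y}. (sc y, h) \<in> P y)"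
    using sc_prop[OF y x] xy by blast
  have sub: "S \<nu> \<mu> \<subseteq> {y}" using Sle[OF x y mu mx oth] .
  have mt: "\<mu> z = tp z" if "z \<in> N" "z \<noteq> y" for z
    using that mx oth by (cases "z = x") auto
  have inS: "z \<in> S \<mu> \<nu>" if "z \<in> N" "z \<noteq> y" "\<nu> z \<noteq> \<mu> z" for z
  proof -
    have "(tp z, \<nu> z) \<in> P z" using tp_better[OF that(1) asg_H[OF nu that(1)]] that mt by simp
    thus ?thesis unfolding S_def using that mt by simp
  qed
  show ?thesis
  proof (cases "y \<in> S \<nu> \<mu>")
    case True
    hence yp: "(\<nu> y, sc y) \<in> P y" unfolding S_def using my by simp
    have nyH: "\<nu> y \<in> H" using asg_H[OF nu y] .
    have nyp: "\<nu> y = tp x"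
    proof (rule ccontr)
      assume a: "\<nu> y \<noteq> tp x"
      have "\<nu> y \<noteq> sc y" using yp irr[OF y] by metis
      hence "\<nu> y \<in> H - {tp y, sc y}" using nyH a tpy by simp
      hence "(sc y, \<nu> y) \<in> P y" using scp by blast
      thus False using asy[OF y yp] by simp
    qed
    have nx: "\<nu> x \<noteq> tp x" using asg_inj[OF nu x y] xy nyp by metis
    have xin: "x \<in> S \<mu> \<nu>" using inS[OF x] xy nx mx by metis
    obtain c where c: "c \<in> S \<mu> \<nu>" "c \<noteq> x"
    proof (cases "\<nu> x = sc y")
      case True
      obtain c where cc: "\<nu> c \<noteq> sw \<mu> x y c" using n2 by blast
      have swM: "sw \<mu> x y \<in> M" using sw_assign[OF mu x y] .
      have cN: "c \<in> N"
      proof (rule ccontr)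
        assume "c \<notin> N"
        hence "\<nu> c = undefined" "sw \<mu> x y c = undefined"
          using asg[OF nu] asg[OF swM] unfolding extensional_def by blast+
        thus False using cc by simp
      qed
      have cx: "c \<noteq> x" using cc True my by auto
      have cy: "c \<noteq> y" using cc nyp mx by auto
      have "\<nu> c \<noteq> \<mu> c" using cc sw_o[OF cx cy] by simp
      thus ?thesis using that inS[OF cN cy] cx by blast
    next
      case False
      obtain c where cN: "c \<in> N" and nc: "\<nu> c = sc y" using asg_surj[OF nu] scp by blast
      have cx: "c \<noteq> x" using False nc by blast
      have cy: "c \<noteq> y" using nc nyp scp tpy by auto
      have "\<mu> c \<noteq> \<mu> y" using asg_inj[OF mu cN y] cy by blast
      hence "\<nu> c \<noteq> \<mu> c" using nc my by simp
      thus ?thesis using that inS[OF cN cy] cx by blast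
    qed
    have "{x, c} \<subseteq> S \<mu> \<nu>" using xin c by blast
    hence "card {x,c} \<le> card (S \<mu> \<nu>)" using card_mono[OF S_fin] by blast
    hence "2 \<le> card (S \<mu> \<nu>)" using c by simp
    moreover have "card (S \<nu> \<mu>) \<le> 1" using card_mono[OF _ sub] by simp
    ultimately show ?thesis by simp
  next
    case False
    hence e: "S \<nu> \<mu> = {}" using sub by blast
    obtain c where cc: "\<nu> c \<noteq> \<mu> c" using n1 by blast
    have cN: "c \<in> N"
    proof (rule ccontr)
      assume "c \<notin> N"
      hence "\<nu> c = undefined" "\<mu> c = undefined"
        using asg[OF nu] asg[OF mu] unfolding extensional_def by blast+
      thus False using cc by simp
    qed
    have "S \<mu> \<nu> \<noteq> {}"
    proof (cases "c = y")
      case False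
      thus ?thesis using inS[OF cN False cc] by blast
    next
      case True
      show ?thesis
      proof (cases "\<nu> y = tp x")
        case True
        have nx: "\<nu> x \<noteq> tp x" using asg_inj[OF nu x y] xy True by metis
        thus ?thesis using inS[OF x] xy mx by fastforce
      next
        case False
        have "\<nu> y \<in> H - {tp y, sc y}" using asg_H[OF nu y] False tpy cc True my by auto
        hence "(sc y, \<nu> y) \<in> P y" using scp by blast
        hence "y \<in> S \<mu> \<nu>" unfolding S_def using y my by simp
        thus ?thesis by blast
      qed
    qed
    hence "0 < card (S \<mu> \<nu>)" using S_fin card_gt_0_iff by blast
    thus ?thesis using e by simp
  qed
qed

lemma dom_all:
  assumes x: "x \<in> N" and y: "y \<in> N" and xy: "x \<noteq> y" and mu: "\<mu> \<in> M"
    and mx: "\<mu> x = tp x" and tpy: "tp y = tp x" and my: "\<mu> y = sc y"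
    and oth: "\<forall>z\<in>N-{x,y}. \<mu> z = tp z"
    and nu: "\<nu> \<in> M"
  shows "(\<mu>, \<nu>) \<in> R"
proof -
  have scp: "sc y \<in> H \<and> sc y \<noteq> tp y \<and> (\<forall>h\<in>H - {tp y, sc y}. (sc y, h) \<in> P y)"
    using sc_prop[OF y x] xy by blast
  have "card (S \<nu> \<mu>) \<le> card (S \<mu> \<nu>)"
  proof (cases "\<nu> = \<mu>")
    case True
    thus ?thesis by simp
  next
    case n1: False
    show ?thesis
    proof (cases "\<nu> = sw \<mu> x y")
      case True
      have sub: "S \<nu> \<mu> \<subseteq> {y}" using Sle[OF x y mu mx oth] .
      have "\<nu> x = sc y" using True my by simp
      hence "(tp x, \<nu> x) \<in> P x" using tp_better[OF x] scp tpy by auto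
      hence "x \<in> S \<mu> \<nu>" unfolding S_def using x mx by simp
      hence "1 \<le> card (S \<mu> \<nu>)" using S_fin
        by (metis One_nat_def Suc_leI card_gt_0_iff empty_iff)
      moreover have "card (S \<nu> \<mu>) \<le> 1" using card_mono[OF _ sub] by simp
      ultimately show ?thesis by simp
    next
      case False
      thus ?thesis using dom_strict[OF assms(1-8) nu n1] by simp
    qed
  qed
  thus ?thesis using R_iff mu nu by simp
qed


lemma backward:
  assumes x: "x \<in> N" and y: "y \<in> N" and xy: "x \<noteq> y" and tpx: "tp x = p" and tpy: "tp y = p"
    and inj: "inj_on tp (N - {y})" and scx: "sc x = q" and scy: "sc y = q"
    and nq: "\<forall>z\<in>N. tp z \<noteq> q"
  shows "card (TC N H P) = 2"
proof -
  have scp: "sc y \<in> H \<and> sc y \<noteq> tp y \<and> (\<forall>h\<in>H - {tp y, sc y}. (sc y, h) \<in> P y)"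
    using sc_prop[OF y x] xy by blast
  define \<mu> where "\<mu> = restrict (\<lambda>z. if z = y then q else tp z) N"
  have muM: "\<mu> \<in> M"
  proof (rule mk_assign)
    show "\<mu> \<in> extensional N" unfolding \<mu>_def by (rule restrict_extensional)
    show "inj_on \<mu> N"
    proof (rule inj_onI)
      fix z1 z2 assume z: "z1 \<in> N" "z2 \<in> N" "\<mu> z1 = \<mu> z2"
      show "z1 = z2"
      proof (cases "z1 = y")
        case True
        have "\<mu> z1 = q" unfolding \<mu>_def using True z(1) by simp
        hence "\<mu> z2 = q" using z(3) by simp
        hence "z2 = y" unfolding \<mu>_def using z(2) nq by (simp split: if_splits)
        thus ?thesis using True by simp
      next
        case False
        show ?thesis
        proof (cases "z2 = y")
          case True
          have "\<mu> z2 = q" unfolding \<mu>_def using True z(2) by simp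
          hence "\<mu> z1 = q" using z(3) by simp
          hence "z1 = y" unfolding \<mu>_def using z(1) nq by (simp split: if_splits)
          thus ?thesis using False by simp
        next
          case f2: False
          have "tp z1 = tp z2" using z False f2 unfolding \<mu>_def by simp
          thus ?thesis using inj z False f2 by (meson DiffI inj_onD singletonD)
        qed
      qed
    qed
    show "\<mu> ` N \<subseteq> H"
    proof (rule image_subsetI)
      fix z assume z: "z \<in> N"
      show "\<mu> z \<in> H" unfolding \<mu>_def using z scp scy tp_H[OF z] by simp
    qed
  qed
  have mx: "\<mu> x = tp x" unfolding \<mu>_def using x xy by simp
  have my: "\<mu> y = sc y" unfolding \<mu>_def using y scy by simp
  have tpy': "tp y = tp x" using tpx tpy by simp
  have oth: "\<forall>z\<in>N-{x,y}. \<mu> z = tp z" unfolding \<mu>_def by auto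
  define \<mu>' where "\<mu>' = sw \<mu> x y"
  have mu'M: "\<mu>' \<in> M" unfolding \<mu>'_def using sw_assign[OF muM x y] .
  have my': "\<mu>' y = tp y" unfolding \<mu>'_def using mx tpy' by simp
  have mx': "\<mu>' x = sc x" unfolding \<mu>'_def using my scx scy by simp
  have oth': "\<forall>z\<in>N-{y,x}. \<mu>' z = tp z"
  proof
    fix z assume z: "z \<in> N-{y,x}"
    hence zx: "z \<noteq> x" and zy: "z \<noteq> y" by auto
    have "\<mu>' z = \<mu> z" unfolding \<mu>'_def using sw_o[OF zx zy] .
    thus "\<mu>' z = tp z" using oth z by simp
  qed
  have inv: "sw \<mu>' y x = \<mu>" unfolding \<mu>'_def by (rule sw_inv)
  have tpx': "tp x = tp y" using tpy' by simp
  have d1: "(\<mu>, \<nu>) \<in> R" if "\<nu> \<in> M" for \<nu>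
    using dom_all[OF x y xy muM mx tpy' my oth that] .
  have d2: "(\<mu>', \<nu>) \<in> R" if "\<nu> \<in> M" for \<nu>
    using dom_all[OF y x xy[symmetric] mu'M my' tpx' mx' oth' that] .
  have s1: "card (S \<nu> \<mu>) < card (S \<mu> \<nu>)" if "\<nu> \<in> M" "\<nu> \<noteq> \<mu>" "\<nu> \<noteq> \<mu>'" for \<nu>
    using dom_strict[OF x y xy muM mx tpy' my oth that(1,2)] that(3) unfolding \<mu>'_def by simp
  have s2: "card (S \<nu> \<mu>') < card (S \<mu>' \<nu>)" if "\<nu> \<in> M" "\<nu> \<noteq> \<mu>" "\<nu> \<noteq> \<mu>'" for \<nu>
    using dom_strict[OF y x xy[symmetric] mu'M my' tpx' mx' oth' that(1,3)] that(2) inv by simp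
  have closed: "b \<in> M - {\<mu>, \<mu>'}" if "a \<in> M - {\<mu>, \<mu>'}" "(a, b) \<in> R" for a b
  proof -
    have bM: "b \<in> M" using R_M[OF that(2)] by blast
    have le: "card (S b a) \<le> card (S a b)" using that(2) R_iff by blast
    have aM: "a \<in> M" "a \<noteq> \<mu>" "a \<noteq> \<mu>'" using that(1) by auto
    have "b \<noteq> \<mu>"
    proof
      assume "b = \<mu>"
      thus False using le s1[OF aM] by simp
    qed
    moreover have "b \<noteq> \<mu>'"
    proof
      assume "b = \<mu>'"
      thus False using le s2[OF aM] by simp
    qed
    ultimately show ?thesis using bM by blast
  qed
  have T1: "\<mu> \<in> TC N H P" unfolding TC_def
  proof (intro CollectI conjI ballI)
    show "\<mu> \<in> M" by (rule muM)
    fix \<nu> assume "\<nu> \<in> M"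
    show "(\<mu>, \<nu>) \<in> R\<^sup>+" by (rule r_into_trancl, rule d1) fact
  qed
  have T2: "\<mu>' \<in> TC N H P" unfolding TC_def
  proof (intro CollectI conjI ballI)
    show "\<mu>' \<in> M" by (rule mu'M)
    fix \<nu> assume "\<nu> \<in> M"
    show "(\<mu>', \<nu>) \<in> R\<^sup>+" by (rule r_into_trancl, rule d2) fact
  qed
  have T3: "l \<in> {\<mu>, \<mu>'}" if lT: "l \<in> TC N H P" for l
  proof (rule ccontr)
    assume ln: "l \<notin> {\<mu>, \<mu>'}"
    have lX: "l \<in> M - {\<mu>, \<mu>'}" using ln TC_M[OF lT] by blast
    have "\<forall>\<nu>\<in>M. (l, \<nu>) \<in> R\<^sup>+" using lT unfolding TC_def by simp
    hence reach: "(l, \<mu>) \<in> R\<^sup>+" using muM by (rule bspec)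
    define X where "X = M - {\<mu>, \<mu>'}"
    have lX': "l \<in> X" using lX unfolding X_def .
    have closedX: "b \<in> X" if "a \<in> X" "(a, b) \<in> R" for a b
      using closed that unfolding X_def by blast
    have gen: "c \<in> X" if "(l, c) \<in> R\<^sup>+" for c
      using that
    proof (induction rule: trancl_induct)
      case (base b)
      then show ?case using closedX[OF lX'] by blast
    next
      case (step b c)
      then show ?case using closedX by blast
    qed
    have "\<mu> \<in> X" using gen[OF reach] .
    thus False unfolding X_def by blast
  qed
  have TCe: "TC N H P = {\<mu>, \<mu>'}"
  proof (rule equalityI)
    show "TC N H P \<subseteq> {\<mu>, \<mu>'}" using T3 by (rule subsetI)
    show "{\<mu>, \<mu>'} \<subseteq> TC N H P" using T1 T2 by simp
  qed
  have pq: "p \<noteq> q" using scp scy tpy by metis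
  have "\<mu> x \<noteq> \<mu>' x" unfolding mx mx' scx tpx using pq by simp
  hence "\<mu> \<noteq> \<mu>'" by metis
  thus ?thesis unfolding TCe by simp
qed

lemma Lsec:
  assumes T: "TC N H P = {\<rho>, \<rho>2}" and a: "a \<in> N" and b: "b \<in> N" and ab: "a \<noteq> b"
    and rb: "\<rho> b = tp a" and ra: "\<rho> a \<noteq> tp a" and r2: "\<rho>2 = sw \<rho> a b"
  shows "sc a = \<rho> a"
proof -
  have rT: "\<rho> \<in> TC N H P" using T by blast
  have rM: "\<rho> \<in> M" using TC_M[OF rT] .
  show ?thesis
  proof (rule sc_eq[OF a asg_H[OF rM a] ra], rule ballI)
    fix h assume h: "h \<in> H - {tp a, \<rho> a}"
    show "(\<rho> a, h) \<in> P a"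
    proof (rule ccontr)
      assume nh: "(\<rho> a, h) \<notin> P a"
      have hp: "(h, \<rho> a) \<in> P a" using tot[OF a asg_H[OF rM a], of h] h nh by blast
      obtain c where cN: "c \<in> N" and rc: "\<rho> c = h" using asg_surj[OF rM] h by blast
      have ca: "c \<noteq> a" using rc h by blast
      have cb: "c \<noteq> b" using rc h rb by blast
      have st: "sw \<rho> a c \<in> TC N H P \<and> sw \<rho> a c \<noteq> \<rho>" using swap_TC[OF rT a cN] hp rc by simp
      hence "sw \<rho> a c = \<rho>2" using T by blast
      hence "sw \<rho> a c b = sw \<rho> a b b" using r2 by simp
      hence "\<rho> b = \<rho> a" using sw_o[OF ab[symmetric] cb[symmetric]] by simp
      thus False using asg_inj[OF rM b a] ab by blast
    qed
  qed
qed

lemma forward: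
  assumes c2: "card (TC N H P) = 2"
  shows "\<exists>x\<in>N. \<exists>y\<in>N. \<exists>p q. x \<noteq> y \<and> tp x = p \<and> tp y = p \<and> inj_on tp (N - {y})
            \<and> sc x = q \<and> sc y = q \<and> (\<forall>z\<in>N. tp z \<noteq> q)"
proof -
  obtain \<mu> \<mu>' where T: "TC N H P = {\<mu>, \<mu>'}" and ne: "\<mu> \<noteq> \<mu>'"
    using c2 card_2_iff by metis
  have mT: "\<mu> \<in> TC N H P" and m'T: "\<mu>' \<in> TC N H P" using T by blast+
  have mM: "\<mu> \<in> M" and m'M: "\<mu>' \<in> M" using TC_M mT m'T by blast+
  obtain a where a: "a \<in> N" and ma: "\<mu> a \<noteq> tp a" using alltop_contra[OF mT m'T ne] by blast
  obtain b where b: "b \<in> N" and mb: "\<mu> b = tp a" using asg_surj[OF mM tp_H[OF a]] by blast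
  have pa: "(\<mu> b, \<mu> a) \<in> P a" using tp_better[OF a asg_H[OF mM a]] ma mb by simp
  have "sw \<mu> a b \<in> TC N H P \<and> sw \<mu> a b \<noteq> \<mu>" using swap_TC[OF mT a b pa] .
  hence m'd: "\<mu>' = sw \<mu> a b" using T by blast
  have ab: "a \<noteq> b" using ma mb by blast
  have oth: "\<mu> z = tp z" if z: "z \<in> N" "z \<noteq> a" "z \<noteq> b" for z
  proof (rule ccontr)
    assume nz: "\<mu> z \<noteq> tp z"
    obtain w where w: "w \<in> N" and mw: "\<mu> w = tp z" using asg_surj[OF mM tp_H[OF z(1)]] by blast
    have pz: "(\<mu> w, \<mu> z) \<in> P z" using tp_better[OF z(1) asg_H[OF mM z(1)]] nz mw by simp
    have "sw \<mu> z w \<in> TC N H P \<and> sw \<mu> z w \<noteq> \<mu>" using swap_TC[OF mT z(1) w pz] .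
    hence "sw \<mu> z w = \<mu>'" using T by blast
    hence "sw \<mu> z w z = sw \<mu> a b z" using m'd by simp
    hence "\<mu> w = \<mu> z" using sw_o[OF z(2) z(3)] by simp
    thus False using mw nz by simp
  qed
  have mbb: "\<mu> b = tp b"
  proof (rule ccontr)
    assume nb: "\<mu> b \<noteq> tp b"
    obtain w where w: "w \<in> N" and mw: "\<mu> w = tp b" using asg_surj[OF mM tp_H[OF b]] by blast
    have pb: "(\<mu> w, \<mu> b) \<in> P b" using tp_better[OF b asg_H[OF mM b]] nb mw by simp
    have "sw \<mu> b w \<in> TC N H P \<and> sw \<mu> b w \<noteq> \<mu>" using swap_TC[OF mT b w pb] .
    hence sweq: "sw \<mu> b w = sw \<mu> a b" using T m'd by blast
    have wb: "w \<noteq> b" using mw nb by blast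
    have wa: "w = a"
    proof (rule ccontr)
      assume wa: "w \<noteq> a"
      have "sw \<mu> b w w = sw \<mu> a b w" using sweq by simp
      hence "\<mu> b = \<mu> w" using sw_o[OF wa wb] by simp
      thus False using asg_inj[OF mM b w] wb by blast
    qed
    have "\<forall>z\<in>N. \<mu>' z = tp z"
    proof
      fix z assume z: "z \<in> N"
      show "\<mu>' z = tp z"
      proof (cases "z = a")
        case True thus ?thesis using m'd mb by simp
      next
        case za: False
        show ?thesis
        proof (cases "z = b")
          case True thus ?thesis using m'd mw wa by simp
        next
          case False thus ?thesis using m'd sw_o[OF za False] oth[OF z za False] by simp
        qed
      qed
    qed
    thus False using alltop_contra[OF m'T mT ne[symmetric]] by blast
  qed
  have sca: "sc a = \<mu> a" using Lsec[OF T a b ab mb ma m'd] .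
  have T': "TC N H P = {\<mu>', \<mu>}" using T by blast
  have m'a: "\<mu>' a = tp b" using m'd mbb by simp
  have m'b: "\<mu>' b \<noteq> tp b" using m'd ma mb mbb by simp
  have inv: "\<mu> = sw \<mu>' b a" using m'd sw_inv by simp
  have scb: "sc b = \<mu>' b" using Lsec[OF T' b a ab[symmetric] m'a m'b inv] .
  have tpb: "tp b = tp a" using mb mbb by simp
  have tpe: "tp z = \<mu> (if z = a then b else z)" if "z \<in> N - {b}" for z
    using that mb oth by auto
  have inj: "inj_on tp (N - {b})"
  proof (rule inj_onI)
    fix z1 z2 assume z: "z1 \<in> N - {b}" "z2 \<in> N - {b}" "tp z1 = tp z2"
    have "\<mu> (if z1 = a then b else z1) = \<mu> (if z2 = a then b else z2)" using z tpe by simp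
    hence "(if z1 = a then b else z1) = (if z2 = a then b else z2)"
      using asg_inj[OF mM] z b by (simp split: if_splits)
    thus "z1 = z2" using z by (auto split: if_splits)
  qed
  have nq: "\<forall>z\<in>N. tp z \<noteq> \<mu> a"
  proof
    fix z assume z: "z \<in> N"
    show "tp z \<noteq> \<mu> a"
    proof (cases "z = a \<or> z = b")
      case True
      have "\<mu> b \<noteq> \<mu> a" using asg_inj[OF mM b a] ab by blast
      thus ?thesis using True mb tpb by auto
    next
      case False
      hence "\<mu> z \<noteq> \<mu> a" using asg_inj[OF mM z a] by blast
      thus ?thesis using oth[OF z] False by simp
    qed
  qed
  have scb': "sc b = \<mu> a" using scb m'd by simp
  show ?thesis
    apply (rule bexI[OF _ a], rule bexI[OF _ b])
    apply (rule exI[of _ "tp a"], rule exI[of _ "\<mu> a"])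
    using ab tpb inj sca scb' nq by simp
qed

lemma TC_char:
  "card (TC N H P) = 2 \<longleftrightarrow>
           (\<exists>x\<in>N. \<exists>y\<in>N. \<exists>p q. x \<noteq> y
              \<and> first_choice H (P x) = p \<and> first_choice H (P y) = p
              \<and> inj_on (\<lambda>z. first_choice H (P z)) (N - {y})
              \<and> second_choice H (P x) = q \<and> second_choice H (P y) = q
              \<and> (\<forall>z\<in>N. first_choice H (P z) \<noteq> q))"
proof -
  have tpd: "tp = (\<lambda>z. first_choice H (P z))" by (rule ext) (simp add: tp_def)
  have scd: "sc = (\<lambda>z. second_choice H (P z))" by (rule ext) (simp add: sc_def)
  have "card (TC N H P) = 2 \<longleftrightarrow>
           (\<exists>x\<in>N. \<exists>y\<in>N. \<exists>p q. x \<noteq> y \<and> tp x = p \<and> tp y = p \<and> inj_on tp (N - {y})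
            \<and> sc x = q \<and> sc y = q \<and> (\<forall>z\<in>N. tp z \<noteq> q))"
  proof
    assume "card (TC N H P) = 2" thus "\<exists>x\<in>N. \<exists>y\<in>N. \<exists>p q. x \<noteq> y \<and> tp x = p \<and> tp y = p \<and> inj_on tp (N - {y})
            \<and> sc x = q \<and> sc y = q \<and> (\<forall>z\<in>N. tp z \<noteq> q)" by (rule forward)
  next
    assume "\<exists>x\<in>N. \<exists>y\<in>N. \<exists>p q. x \<noteq> y \<and> tp x = p \<and> tp y = p \<and> inj_on tp (N - {y})
            \<and> sc x = q \<and> sc y = q \<and> (\<forall>z\<in>N. tp z \<noteq> q)"
    then obtain x y p q where h: "x \<in> N" "y \<in> N" "x \<noteq> y" "tp x = p" "tp y = p" "inj_on tp (N - {y})"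
      "sc x = q" "sc y = q" "\<forall>z\<in>N. tp z \<noteq> q" by blast
    show "card (TC N H P) = 2" using backward[OF h] .
  qed
  thus ?thesis unfolding tpd scd .
qed

end

lemma weak_conv: "weak_pref_agents N (\<lambda>x. (P x)\<inverse>) \<mu> \<nu> = weak_pref_agents N P \<nu> \<mu>"
  unfolding weak_pref_agents_def by auto

lemma pop_conv: "pop_rel N H (\<lambda>x. (P x)\<inverse>) = (pop_rel N H P)\<inverse>"
  unfolding pop_rel_def weak_conv by auto

lemma BC_TC: "BC N H P = TC N H (\<lambda>x. (P x)\<inverse>)"
  unfolding BC_def TC_def pop_conv trancl_converse by auto

lemma profile_conv: "is_profile N H P \<Longrightarrow> is_profile N H (\<lambda>x. (P x)\<inverse>)"
  unfolding is_profile_def is_pref_def strict_linear_order_on_def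
  by (auto simp: trans_def irrefl_def total_on_def)

theorem lemmaB3:
  fixes N :: "'a set" and H :: "'h set" and P :: "'a \<Rightarrow> ('h \<times> 'h) set"
  assumes "finite N" and "finite H" and "card N = card H"
    and "is_profile N H P"
  shows "(card (TC N H P) = 2 \<longleftrightarrow>
           (\<exists>x\<in>N. \<exists>y\<in>N. \<exists>p q. x \<noteq> y
              \<and> first_choice H (P x) = p \<and> first_choice H (P y) = p
              \<and> inj_on (\<lambda>z. first_choice H (P z)) (N - {y})
              \<and> second_choice H (P x) = q \<and> second_choice H (P y) = q
              \<and> (\<forall>z\<in>N. first_choice H (P z) \<noteq> q)))
       \<and> (card (BC N H P) = 2 \<longleftrightarrow>
           (\<exists>x\<in>N. \<exists>y\<in>N. \<exists>p q. x \<noteq> y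
              \<and> last_choice H (P x) = p \<and> last_choice H (P y) = p
              \<and> inj_on (\<lambda>z. last_choice H (P z)) (N - {y})
              \<and> second_last_choice H (P x) = q \<and> second_last_choice H (P y) = q
              \<and> (\<forall>z\<in>N. last_choice H (P z) \<noteq> q)))"
proof -
  interpret A: hm N H P using assms by unfold_locales
  interpret B: hm N H "\<lambda>x. (P x)\<inverse>" using assms profile_conv by unfold_locales
  show ?thesis
    unfolding BC_TC last_choice_def second_last_choice_def
    using A.TC_char B.TC_char by blast
qed

end
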